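(* Let $\{s_n\}_{n\ge 0}$ and $\{r_n\}_{n\ge 0}$ be the little and large Schröder numbers, i.e. the sequences satisfying $(n+2)z_{n+1}=3(2n+1)z_n-(n-1)z_{n-1}$ for $n\ge 1$, with initial values $s_0=s_1=1$ and $r_0=1$, $r_1=2$ respectively. Then both $\{s_n\}_{n\ge 0}$ and $\{r_n\}_{n\ge0}$ are log-convex.
   Context: A sequence $a_0,a_1,\ldots$ of nonnegative real numbers is log-convex if $a_{k-1}a_{k+1}\ge a_k^2$ for all $k\ge 1$. *)

theory Defs
  imports Complex_Main
begin

fun schroeder_rec :: "real \<Rightarrow> real \<Rightarrow> nat \<Rightarrow> real" where
  "schroeder_rec a b 0 = a"
| "schroeder_rec a b (Suc 0) = b"
| "schroeder_rec a b (Suc (Suc n)) =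
     (3 * (2 * real (Suc n) + 1) * schroeder_rec a b (Suc n)
      - (real (Suc n) - 1) * schroeder_rec a b n) / (real (Suc n) + 2)"

definition little_schroeder :: "nat \<Rightarrow> real" where
  "little_schroeder = schroeder_rec 1 1"

definition large_schroeder :: "nat \<Rightarrow> real" where
  "large_schroeder = schroeder_rec 1 2"

definition log_convex :: "(nat \<Rightarrow> real) \<Rightarrow> bool" where
  "log_convex a \<longleftrightarrow> (\<forall>k. 0 \<le> a k) \<and> (\<forall>k\<ge>1. a (k - 1) * a (k + 1) \<ge> (a k)^2)"

end

theory Submission
  imports Defs
begin

lemma step_ineq:
  fixes x y w n :: real
  assumes x: "0 < x" and xy: "x \<le> y" and yw: "y^2 \<le> x * w" and n: "0 \<le> n"
    and wdef: "w = (3 * (2 * n + 3) * y - n * x) / (n + 3)"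
  shows "w^2 \<le> y * ((3 * (2 * n + 5) * w - (n + 1) * y) / (n + 4))"
proof -
  have y: "0 < y" using x xy by linarith
  define p where "p = y / x"
  define q where "q = w / y"
  have p1: "1 \<le> p" using x xy by (simp add: p_def)
  have w: "0 < w"
  proof -
    have "0 < y^2" using y by simp
    then have "0 < x * w" using yw by linarith
    then show ?thesis using x by (simp add: zero_less_mult_iff)
  qed
  have qg: "q = (3 * (2 * n + 3) - n / p) / (n + 3)"
    using x y n unfolding q_def p_def wdef by (simp add: field_simps)
  have pq: "p \<le> q"
  proof -
    have "y / x \<le> w / y" using yw x y by (simp add: field_simps power2_eq_square)
    then show ?thesis by (simp add: p_def q_def)
  qed
  have p0: "0 < p" using p1 by simp
  have q0: "0 < q" using p0 pq by simp
  have "(n + 1) / q \<le> (n + 1) / p"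
    using pq p0 n by (intro divide_left_mono) auto
  then have fq: "(3 * (2 * n + 5) - (n + 1) / p) / (n + 4) \<le> (3 * (2 * n + 5) - (n + 1) / q) / (n + 4)"
    using n by (intro divide_right_mono) auto
  have fg: "(3 * (2 * n + 3) - n / p) / (n + 3) \<le> (3 * (2 * n + 5) - (n + 1) / p) / (n + 4)"
  proof -
    have "(3 * (2 * n + 5) - (n + 1) / p) / (n + 4) - (3 * (2 * n + 3) - n / p) / (n + 3)
        = (9 - 3 / p) / ((n + 3) * (n + 4))"
    proof -
      have a: "n + 3 \<noteq> 0" "n + 4 \<noteq> 0" "p \<noteq> 0" using n p0 by auto
      have "\<And>u::real. (3 * (2 * n + 5) - (n + 1) * u) / (n + 4) - (3 * (2 * n + 3) - n * u) / (n + 3)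
        = (9 - 3 * u) / ((n + 3) * (n + 4))"
        using a by (simp add: field_simps)
      from this[of "1/p"] show ?thesis by simp
    qed
    moreover have "0 \<le> (9 - 3 / p) / ((n + 3) * (n + 4))"
    proof -
      have "3 / p \<le> 3" using p1 by (simp add: divide_le_eq)
      then show ?thesis using n by simp
    qed
    ultimately show ?thesis by linarith
  qed
  have qf: "q \<le> (3 * (2 * n + 5) - (n + 1) / q) / (n + 4)"
    using qg fg fq by linarith
  then have "q * (n + 4) \<le> 3 * (2 * n + 5) - (n + 1) / q"
    using n by (simp add: le_divide_eq)
  then have "q * q * (n + 4) \<le> 3 * (2 * n + 5) * q - (n + 1)"
    using q0 by (simp add: field_simps)
  then have m: "(q * q * (n + 4)) * (y * y) \<le> (3 * (2 * n + 5) * q - (n + 1)) * (y * y)"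
    by (intro mult_right_mono) auto
  have e1: "w * w * (n + 4) = (q * q * (n + 4)) * (y * y)"
    using y unfolding q_def by (simp add: field_simps)
  have e2: "3 * (2 * n + 5) * w * y - (n + 1) * y * y = (3 * (2 * n + 5) * q - (n + 1)) * (y * y)"
    using y unfolding q_def by (simp add: field_simps)
  have "w * w * (n + 4) \<le> 3 * (2 * n + 5) * w * y - (n + 1) * y * y"
    using m unfolding e1 e2 .
  then show ?thesis using n by (simp add: field_simps power2_eq_square)
qed

lemma inv:
  fixes b :: real
  assumes b1: "1 \<le> b" and b3: "b \<le> 3"
  shows "0 < schroeder_rec 1 b n \<and> schroeder_rec 1 b n \<le> schroeder_rec 1 b (Suc n)
     \<and> (schroeder_rec 1 b (Suc n))^2 \<le> schroeder_rec 1 b n * schroeder_rec 1 b (Suc (Suc n))"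
proof (induction n)
  case 0
  then show ?case using b1 b3 by (simp add: power2_eq_square)
next
  case (Suc n)
  let ?z = "schroeder_rec 1 b"
  have w: "?z (Suc (Suc n)) = (3 * (2 * real n + 3) * ?z (Suc n) - real n * ?z n) / (real n + 3)"
    by (simp add: algebra_simps)
  have w3: "?z (Suc (Suc (Suc n))) = (3 * (2 * real n + 5) * ?z (Suc (Suc n)) - (real n + 1) * ?z (Suc n)) / (real n + 4)"
    by (simp add: algebra_simps)
  have x: "0 < ?z n" and xy: "?z n \<le> ?z (Suc n)" and yw: "(?z (Suc n))^2 \<le> ?z n * ?z (Suc (Suc n))"
    using Suc by auto
  have y: "0 < ?z (Suc n)" using x xy by linarith
  have "?z (Suc n) * ?z (Suc n) \<le> ?z n * ?z (Suc (Suc n))" using yw by (simp add: power2_eq_square)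
  also have "\<dots> \<le> ?z (Suc n) * ?z (Suc (Suc n))"
  proof -
    have "0 < ?z (Suc (Suc n))"
    proof -
      have "0 < ?z n * ?z (Suc (Suc n))" using y yw by (smt (verit) power2_eq_square mult_pos_pos)
      then show ?thesis using x by (metis zero_less_mult_pos)
    qed
    then show ?thesis using xy by (metis less_imp_le mult_right_mono)
  qed
  finally have yw2: "?z (Suc n) \<le> ?z (Suc (Suc n))" using y by (metis mult_le_cancel_left_pos)
  have "(?z (Suc (Suc n)))^2 \<le> ?z (Suc n) * ((3 * (2 * real n + 5) * ?z (Suc (Suc n)) - (real n + 1) * ?z (Suc n)) / (real n + 4))"
    by (rule step_ineq[OF x xy yw _ w]) simp
  then show ?case using y yw2 w3 by simp
qed

lemma lc:
  fixes b :: real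
  assumes b1: "1 \<le> b" and b3: "b \<le> 3"
  shows "log_convex (schroeder_rec 1 b)"
  unfolding log_convex_def
proof (intro conjI allI impI)
  fix k
  show "0 \<le> schroeder_rec 1 b k" using inv[OF b1 b3, of k] by simp
next
  fix k :: nat assume "1 \<le> k"
  then obtain m where k: "k = Suc m" by (cases k) auto
  show "(schroeder_rec 1 b k)^2 \<le> schroeder_rec 1 b (k - 1) * schroeder_rec 1 b (k + 1)"
    using inv[OF b1 b3, of m] k by simp
qed

theorem corollary3p13:
  shows "log_convex little_schroeder \<and> log_convex large_schroeder"
  unfolding little_schroeder_def large_schroeder_def
  using lc[of 1] lc[of 2] by simp

end
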